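(* Let $1\le b<M$ and let $C$ be the array code over $\mathbb{F}_q$ whose columns are associated with all $b$-dimensional subspaces of $\mathbb{F}_q^M$, each exactly once. Then $C$ has node locality $r_{\mathrm n}=2$, and symbol locality $r_{\mathrm s}=1$ if $b>1$ and $r_{\mathrm s}=2$ if $b=1$.
   Context: $q$ is a prime power. A $[b\times n,M,d]$ array code over $\mathbb{F}_q$ is an $\mathbb{F}_q$-linear space of $b\times n$ matrices of dimension $M$. Given $b$-dimensional subspaces $V_1,\dots,V_n$ of $\mathbb{F}_q^M$, the array code whose columns are associated with them is obtained by placing a basis of $V_j$ as columns $(j-1)b+1,\dots,jb$ (the $j$th thick column) of an $M\times bn$ matrix $G$ and taking all arrays whose column-by-column flattening lies in the row space of $G$. A set $S\subseteq[n]\setminus\{j\}$ is a recovery set for codeword column $j$ if every entry $c_{i,j}$ ($i\in[b]$) is a fixed $\mathbb{F}_q$-linear combination (possibly different for each $i$) of the entries in the columns indexed by $S$, valid for all codewords; equivalently $V_j\subseteq\sum_{k\in S}V_k$. It is a recovery set for symbol $(i,j)$ if $c_{i,j}$ is such a fixed linear combination; equivalently the $i$th column of the $j$th thick column of $G$ lies in $\sum_{k\in S}V_k$. The node locality $r_{\mathrm n}$ (resp. symbol locality $r_{\mathrm s}$) is the smallest $r$ such that every codeword column (resp. every symbol) has a recovery set of size at most $r$. *)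

theory Defs
  imports "HOL-Analysis.Analysis"
begin

text \<open>Array codes over a finite field 'a whose thick columns are associated with
  subspaces of 'a^'m (so M = CARD('m)). Columns are indexed by a set N; column j
  is associated with the subspace Vf j, and Bf j i (i < b) is the i-th column of the
  j-th thick column of the generator matrix G (a chosen basis of Vf j).\<close>

definition node_recovery_set ::
  "'c set \<Rightarrow> ('c \<Rightarrow> ('a::field^'m) set) \<Rightarrow> 'c \<Rightarrow> 'c set \<Rightarrow> bool" where
  "node_recovery_set N Vf j S \<longleftrightarrow>
     S \<subseteq> N - {j} \<and> Vf j \<subseteq> vec.span (\<Union>k\<in>S. Vf k)"

definition symbol_recovery_set ::
  "'c set \<Rightarrow> ('c \<Rightarrow> ('a::field^'m) set) \<Rightarrow> ('c \<Rightarrow> nat \<Rightarrow> 'a^'m)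
     \<Rightarrow> nat \<Rightarrow> 'c \<Rightarrow> 'c set \<Rightarrow> bool" where
  "symbol_recovery_set N Vf Bf i j S \<longleftrightarrow>
     S \<subseteq> N - {j} \<and> Bf j i \<in> vec.span (\<Union>k\<in>S. Vf k)"

definition node_locality ::
  "'c set \<Rightarrow> ('c \<Rightarrow> ('a::field^'m) set) \<Rightarrow> nat" where
  "node_locality N Vf =
     (LEAST r. \<forall>j\<in>N. \<exists>S. node_recovery_set N Vf j S \<and> card S \<le> r)"

definition symbol_locality ::
  "'c set \<Rightarrow> ('c \<Rightarrow> ('a::field^'m) set) \<Rightarrow> ('c \<Rightarrow> nat \<Rightarrow> 'a^'m) \<Rightarrow> nat \<Rightarrow> nat" where
  "symbol_locality N Vf Bf b =
     (LEAST r. \<forall>j\<in>N. \<forall>i<b. \<exists>S. symbol_recovery_set N Vf Bf i j S \<and> card S \<le> r)"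

definition is_ordered_basis :: "nat \<Rightarrow> (nat \<Rightarrow> 'a::field^'m) \<Rightarrow> ('a^'m) set \<Rightarrow> bool" where
  "is_ordered_basis b B V \<longleftrightarrow>
     inj_on B {..<b} \<and> vec.independent (B ` {..<b}) \<and> vec.span (B ` {..<b}) = V"

end

theory Submission
  imports Defs
begin

lemma mkN:
  fixes A :: "('a::field^'m) set"
  assumes "vec.independent A" "card A = b"
  shows "vec.subspace (vec.span A) \<and> vec.dim (vec.span A) = b"
  using assms vec.subspace_span vec.dim_span_eq_card_independent by auto

lemma eqsub:
  fixes V W :: "('a::field^'m) set"
  assumes "vec.subspace V" "vec.subspace W" "vec.dim V = vec.dim W" "V \<subseteq> W"
  shows "V = W"
proof -
  have "vec.span V = vec.span W" using vec.dim_eq_span[OF assms(4)] assms(3) by simp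
  thus ?thesis using assms(1,2) vec.span_eq_iff by metis
qed

lemma nonUNIV:
  fixes V :: "('a::field^'m) set"
  assumes "vec.dim V < CARD('m)"
  shows "\<exists>u. u \<notin> V"
  using assms vec_dim_card by (metis less_irrefl UNIV_I subsetI subset_antisym)

lemma exN:
  assumes "b \<le> CARD('m)"
  shows "\<exists>A :: ('a::field^'m) set. vec.independent A \<and> card A = b"
proof -
  obtain B :: "('a^'m) set" where B: "vec.independent B" "card B = vec.dim (UNIV :: ('a^'m) set)"
    using vec.basis_exists[of UNIV] by blast
  then have "b \<le> card B" using assms vec_dim_card by metis
  then obtain T where "T \<subseteq> B" "card T = b" by (metis obtain_subset_with_card_n)
  thus ?thesis using B vec.independent_mono by blast
qed

lemma card_img:
  assumes "inj_on f A" "X \<subseteq> A"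
  shows "card (f ` X) = card X"
  using assms by (meson card_image inj_on_subset)

theorem mainTheorem4:
  fixes b :: nat
    and Bf :: "('a::{field,finite}^'m) set \<Rightarrow> nat \<Rightarrow> 'a^'m"
  defines "N \<equiv> {V :: ('a^'m) set. vec.subspace V \<and> vec.dim V = b}"
  assumes "1 \<le> b" and "b < CARD('m)"
    and "\<forall>V\<in>N. is_ordered_basis b (Bf V) V"
  shows "node_locality N id = 2
       \<and> symbol_locality N id Bf b = (if b > 1 then 1 else 2)"
proof -
  have bas: "inj_on (Bf V) {..<b}" "vec.independent (Bf V ` {..<b})"
     "vec.span (Bf V ` {..<b}) = V" if "V \<in> N" for V
    using assms(4) that unfolding is_ordered_basis_def by auto
  have Nsub: "vec.subspace V" "vec.dim V = b" if "V \<in> N" for V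
    using that unfolding N_def by auto
  have inN: "vec.span A \<in> N" if "vec.independent A" "card A = b" for A
    using mkN[OF that] unfolding N_def by auto
  obtain A0 :: "('a^'m) set" where A0: "vec.independent A0" "card A0 = b"
    using exN assms(3) by (metis less_imp_le)
  define V0 where "V0 = vec.span A0"
  have V0N: "V0 \<in> N" using inN A0 V0_def by auto
  have fin: "finite (S :: ('a^'m) set set)" for S by simp
  have nz: "Bf V i \<noteq> 0" if "V \<in> N" "i < b" for V i
  proof -
    have "Bf V i \<in> Bf V ` {..<b}" using that by auto
    thus ?thesis using bas(2)[OF that(1)] vec.dependent_zero by metis
  qed
  have inV: "Bf V i \<in> V" if "V \<in> N" "i < b" for V i
  proof -
    have "Bf V i \<in> Bf V ` {..<b}" using that(2) by simp
    from vec.span_base[OF this] show ?thesis using bas(3)[OF that(1)] by simp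
  qed
  have eqN: "V = W" if "V \<in> N" "W \<in> N" "V \<subseteq> W" for V W
    using eqsub[of V W] Nsub[OF that(1)] Nsub[OF that(2)] that(3) by simp
  have outside: "\<exists>u. u \<notin> V" if "V \<in> N" for V
    using nonUNIV[of V] Nsub(2)[OF that] assms(3) by simp
  have nodeup: "\<exists>S. node_recovery_set N id V S \<and> card S \<le> 2" if VN: "V \<in> N" for V
  proof -
    obtain u where u: "u \<notin> V" using outside VN by blast
    define k where "k = Bf V (b - 1)"
    define A where "A = Bf V ` {..<b-1}"
    have AB: "A \<subseteq> Bf V ` {..<b}" unfolding A_def by auto
    have kB: "k \<in> Bf V ` {..<b}" unfolding k_def using assms(2) by auto
    have Ai: "vec.independent A" using vec.independent_mono[OF bas(2)[OF VN] AB] .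
    have cA: "card A = b - 1" unfolding A_def using card_img[OF bas(1)[OF VN], of "{..<b-1}"] by simp
    have spA: "vec.span A \<subseteq> V" using vec.span_mono[OF AB] bas(3)[OF VN] by simp
    have kV: "k \<in> V" using vec.span_base[OF kB] bas(3)[OF VN] by simp
    have AV: "A \<subseteq> V" using vec.span_superset[of A] spA by (rule subset_trans)
    have ku: "k + u \<notin> V"
    proof
      assume "k + u \<in> V"
      then have "(k + u) - k \<in> V" using vec.subspace_diff[OF Nsub(1)[OF VN] _ kV] by blast
      thus False using u by simp
    qed
    define W1 where "W1 = vec.span (insert u A)"
    define W2 where "W2 = vec.span (insert (k+u) A)"
    have fA: "finite A" by simp
    have W1N: "W1 \<in> N" unfolding W1_def
      apply (rule inN)
      apply (rule vec.independent_insertI) using u spA apply blast using Ai apply assumption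
      using u AV cA fA assms(2) by (auto simp: card_insert_if)
    have W2N: "W2 \<in> N" unfolding W2_def
      apply (rule inN)
      apply (rule vec.independent_insertI) using ku spA apply blast using Ai apply assumption
      using ku AV cA fA assms(2) by (auto simp: card_insert_if)
    have uW1: "u \<in> W1" unfolding W1_def by (simp add: vec.span_base)
    have kuW2: "k + u \<in> W2" unfolding W2_def by (simp add: vec.span_base)
    have "W1 \<noteq> V" using uW1 u by auto
    moreover have "W2 \<noteq> V" using kuW2 ku by auto
    moreover have "V \<subseteq> vec.span (W1 \<union> W2)"
    proof -
      let ?T = "vec.span (W1 \<union> W2)"
      have "Bf V ` {..<b} \<subseteq> ?T"
      proof
        fix x assume x: "x \<in> Bf V ` {..<b}"
        then obtain i where i: "i < b" "x = Bf V i" by auto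
        show "x \<in> ?T"
        proof (cases "i = b - 1")
          case True
          have "(k + u) - u \<in> ?T"
            using vec.span_diff[OF vec.span_base[of "k+u" "W1 \<union> W2"] vec.span_base[of u "W1 \<union> W2"]] uW1 kuW2 by blast
          then show ?thesis using True i k_def by simp
        next
          case False
          then have "x \<in> A" using i A_def by auto
          then have "x \<in> W1" unfolding W1_def by (simp add: vec.span_base)
          thus ?thesis by (simp add: vec.span_base)
        qed
      qed
      then have "vec.span (Bf V ` {..<b}) \<subseteq> ?T"
        by (simp add: vec.span_minimal)
      thus ?thesis using bas(3)[OF VN] by simp
    qed
    ultimately have "node_recovery_set N id V {W1, W2}"
      unfolding node_recovery_set_def using W1N W2N by auto
    moreover have "card {W1, W2} \<le> 2" by (simp add: card_insert_if)
    ultimately show ?thesis by blast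
  qed
  have nodelow: "2 \<le> r" if H: "\<forall>j\<in>N. \<exists>S. node_recovery_set N id j S \<and> card S \<le> r" for r
  proof (rule ccontr)
    assume "\<not> 2 \<le> r"
    obtain S where S0: "node_recovery_set N id V0 S" "card S \<le> r"
      using H V0N by blast
    have S: "node_recovery_set N id V0 S" "card S \<le> 1" using S0 \<open>\<not> 2 \<le> r\<close> by auto
    have Ssub: "S \<subseteq> N - {V0}" "V0 \<subseteq> vec.span (\<Union>S)" using S(1) unfolding node_recovery_set_def by auto
    have b0: "0 < b" using assms(2) by simp
    show False
    proof (cases "S = {}")
      case True
      then have "Bf V0 0 \<in> vec.span {}" using Ssub inV[OF V0N b0] by auto
      thus False using nz[OF V0N b0] by simp
    next
      case False
      then obtain W where "S = {W}" using S(2) fin[of S]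
        using card_le_Suc0_iff_eq[OF fin[of S]] by auto
      then have W: "W \<in> N" "W \<noteq> V0" "V0 \<subseteq> vec.span W" using Ssub by auto
      then have "V0 \<subseteq> W" using Nsub(1)[OF W(1)] vec.span_eq_iff by metis
      thus False using eqN V0N W by blast
    qed
  qed
  have node: "node_locality N id = 2"
    unfolding node_locality_def
    by (rule Least_equality) (use nodeup nodelow in auto)
  have symlow0: "1 \<le> r" if H: "\<forall>j\<in>N. \<forall>i<b. \<exists>S. symbol_recovery_set N id Bf i j S \<and> card S \<le> r" for r
  proof (rule ccontr)
    assume "\<not> 1 \<le> r"
    have b0: "0 < b" using assms(2) by simp
    obtain S where S0: "symbol_recovery_set N id Bf 0 V0 S" "card S \<le> r"
      using H V0N b0 by blast
    have "card S \<le> 0" using S0(2) \<open>\<not> 1 \<le> r\<close> by linarith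
    note S = S0(1) this
    then have "S = {}" using fin[of S] by simp
    then have "Bf V0 0 \<in> vec.span {}" using S(1) unfolding symbol_recovery_set_def by auto
    thus False using nz[OF V0N b0] by simp
  qed
  have sym: "symbol_locality N id Bf b = (if b > 1 then 1 else 2)"
  proof (cases "b > 1")
    case True
    have up: "\<exists>S. symbol_recovery_set N id Bf i V S \<and> card S \<le> 1" if VN: "V \<in> N" and ib: "i < b" for V i
    proof -
      obtain u where u: "u \<notin> V" using outside VN by blast
      define k where "k = (if i = 0 then 1 else (0::nat))"
      have kb: "k < b" "k \<noteq> i" using True k_def by auto
      define A where "A = Bf V ` ({..<b} - {k})"
      have AB: "A \<subseteq> Bf V ` {..<b}" unfolding A_def by auto
      have Ai: "vec.independent A" using vec.independent_mono[OF bas(2)[OF VN] AB] .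
      have cA: "card A = b - 1" unfolding A_def using card_img[OF bas(1)[OF VN], of "{..<b} - {k}"] kb by auto
      have spA: "vec.span A \<subseteq> V" using vec.span_mono[OF AB] bas(3)[OF VN] by simp
      have AV: "A \<subseteq> V" using vec.span_superset[of A] spA by (rule subset_trans)
      define W where "W = vec.span (insert u A)"
      have fA: "finite A" by simp
      have WN: "W \<in> N" unfolding W_def
        apply (rule inN)
        apply (rule vec.independent_insertI) using u spA apply blast using Ai apply assumption
        using u AV cA fA assms(2) by (auto simp: card_insert_if)
      have "u \<in> W" unfolding W_def by (rule vec.span_base) simp
      then have "W \<noteq> V" using u by auto
      moreover have "Bf V i \<in> insert u A" using ib kb unfolding A_def by auto
      then have "Bf V i \<in> W" unfolding W_def by (rule vec.span_base)
      ultimately have "symbol_recovery_set N id Bf i V {W}"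
        unfolding symbol_recovery_set_def using WN vec.span_base by auto
      thus ?thesis by auto
    qed
    have "symbol_locality N id Bf b = 1"
      unfolding symbol_locality_def
      by (rule Least_equality) (use up symlow0 in auto)
    thus ?thesis using True by simp
  next
    case False
    then have b1: "b = 1" using assms(2) by simp
    have up: "\<exists>S. symbol_recovery_set N id Bf i V S \<and> card S \<le> 2" if VN: "V \<in> N" and ib: "i < b" for V i
    proof -
      obtain S where S: "node_recovery_set N id V S" "card S \<le> 2" using nodeup VN by blast
      then have "symbol_recovery_set N id Bf i V S"
        using inV[OF VN ib] unfolding node_recovery_set_def symbol_recovery_set_def by auto
      thus ?thesis using S by blast
    qed
    have low: "2 \<le> r" if H: "\<forall>j\<in>N. \<forall>i<b. \<exists>S. symbol_recovery_set N id Bf i j S \<and> card S \<le> r" for r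
    proof (rule ccontr)
      assume nr: "\<not> 2 \<le> r"
      have "1 \<le> r" using symlow0 H by blast
      obtain S where S0: "symbol_recovery_set N id Bf 0 V0 S" "card S \<le> r"
        using H V0N b1 by blast
      have S: "symbol_recovery_set N id Bf 0 V0 S" "card S \<le> 1" using S0 nr by auto
      have Ssub: "S \<subseteq> N - {V0}" "Bf V0 0 \<in> vec.span (\<Union>S)" using S(1) unfolding symbol_recovery_set_def by auto
      show False
      proof (cases "S = {}")
        case True
        then show False using Ssub nz[OF V0N] b1 by auto
      next
        case False
        then obtain W where "S = {W}" using S(2) fin[of S]
          using card_le_Suc0_iff_eq[OF fin[of S]] by auto
        then have W: "W \<in> N" "W \<noteq> V0" "Bf V0 0 \<in> vec.span W" using Ssub by auto
        then have inW: "Bf V0 0 \<in> W" using Nsub(1)[OF W(1)] vec.span_eq_iff by metis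
        have "Bf V0 ` {..<b} = {Bf V0 0}" using b1 by auto
        then have "V0 = vec.span {Bf V0 0}" using bas(3)[OF V0N] by simp
        also have "\<dots> \<subseteq> W" using inW Nsub(1)[OF W(1)] vec.span_minimal by blast
        finally show False using eqN V0N W by blast
      qed
    qed
    have "symbol_locality N id Bf b = 2"
      unfolding symbol_locality_def
      by (rule Least_equality) (use up low in auto)
    thus ?thesis using False by simp
  qed
  show ?thesis using node sym by simp
qed

end
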